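(* Let $n\geq5$ and let $Z\in\mathbb{R}^{n\times4}$ be totally positive satisfying Assumption (G). For any $i,j\in[n]$ with $\{i-1,i,i+1\}\cap\{j,j+1\}=\emptyset$ (indices mod $n$), the line $P_{(i-1)i(i+1)}\cap L_{j(j+1)}\subset\mathrm{Gr}_{\mathbb{C}}(2,4)$, consisting of lines in $\mathbb{P}^3$ contained in the plane $Z_{i-1}Z_iZ_{i+1}$ and meeting the line $Z_jZ_{j+1}$, does not intersect $\mathcal{A}_n(Z)$.
   Context: $Z$ totally positive: all $4\times4$ minors positive; its rows $Z_1,\dots,Z_n$ are points of $\mathbb{P}^3$. $\mathcal{A}_n(Z)\subset\mathrm{Gr}_{\mathbb{R}}(2,4)$ is the image of the totally nonnegative Grassmannian $\mathrm{Gr}(2,n)_{\ge0}$ under $\mathrm{rowspan}(X)\mapsto\mathrm{rowspan}(XZ)$. $\langle AB\,ij\rangle$ is the determinant of the matrix with rows $A,B,Z_i,Z_j$. Assumption (G): no line $AB$ has more than $4$ of $\langle AB\,i(i+1)\rangle$, $i\in[n]$ (cyclically, $\langle AB\,n(n+1)\rangle=\langle AB\,1n\rangle$), vanishing. *)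

theory Defs
  imports "HOL-Analysis.Analysis"
begin

text \<open>Points of P^3 are represented by vectors in K^4. Indices of Z are 0-based: Z 0, ..., Z (n-1),
  taken cyclically mod n.\<close>

definition mat4 :: "'a::comm_ring_1^4 \<Rightarrow> 'a^4 \<Rightarrow> 'a^4 \<Rightarrow> 'a^4 \<Rightarrow> 'a^4^4" where
  "mat4 a b c d = (\<chi> k. if k = 1 then a else if k = 2 then b else if k = 3 then c else d)"

definition det4 :: "'a::comm_ring_1^4 \<Rightarrow> 'a^4 \<Rightarrow> 'a^4 \<Rightarrow> 'a^4 \<Rightarrow> 'a" where
  "det4 a b c d = det (mat4 a b c d)"

definition totally_positive :: "nat \<Rightarrow> (nat \<Rightarrow> real^4) \<Rightarrow> bool" where
  "totally_positive n Z \<longleftrightarrow>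
     (\<forall>i1 i2 i3 i4. i1 < i2 \<and> i2 < i3 \<and> i3 < i4 \<and> i4 < n \<longrightarrow> det4 (Z i1) (Z i2) (Z i3) (Z i4) > 0)"

definition cvec :: "real^4 \<Rightarrow> complex^4" where
  "cvec v = (\<chi> k. complex_of_real (v $ k))"

definition assumption_G :: "nat \<Rightarrow> (nat \<Rightarrow> real^4) \<Rightarrow> bool" where
  "assumption_G n Z \<longleftrightarrow>
     (\<forall>A B :: complex^4. (\<forall>a b. a *s A + b *s B = 0 \<longrightarrow> a = 0 \<and> b = 0) \<longrightarrow>
        card {i. i < n \<and> det4 A B (cvec (Z i)) (cvec (Z ((i + 1) mod n))) = 0} \<le> 4)"

text \<open>A 2 x n real matrix with rows x1, x2 (columns 0..n-1) representing a point of
  Gr(2,n)_{>=0}: rank 2 and all 2x2 minors nonnegative.\<close>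
definition tnn_Gr2 :: "nat \<Rightarrow> (nat \<Rightarrow> real) \<Rightarrow> (nat \<Rightarrow> real) \<Rightarrow> bool" where
  "tnn_Gr2 n x1 x2 \<longleftrightarrow>
     (\<forall>a b. a < b \<and> b < n \<longrightarrow> x1 a * x2 b - x1 b * x2 a \<ge> 0) \<and>
     (\<exists>a b. a < n \<and> b < n \<and> x1 a * x2 b - x1 b * x2 a \<noteq> 0)"

text \<open>The amplituhedron A_n(Z) as a set of 2-dimensional subspaces of R^4:
  the row spans of XZ for X in Gr(2,n)_{>=0}.\<close>
definition amplituhedron :: "nat \<Rightarrow> (nat \<Rightarrow> real^4) \<Rightarrow> (real^4) set set" where
  "amplituhedron n Z =
     {W. \<exists>x1 x2. tnn_Gr2 n x1 x2 \<and>
          W = span {(\<Sum>k<n. x1 k *\<^sub>R Z k), (\<Sum>k<n. x2 k *\<^sub>R Z k)} \<and> dim W = 2}"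

end

theory Submission
  imports Defs
begin

lemma det_4:
  "det (A::'a::comm_ring_1^4^4) = A$1$1 * A$2$2 * A$3$3 * A$4$4 - A$1$1 * A$2$2 * A$3$4 * A$4$3 - A$1$1 * A$2$3 * A$3$2 * A$4$4 + A$1$1 * A$2$3 * A$3$4 * A$4$2 + A$1$1 * A$2$4 * A$3$2 * A$4$3 - A$1$1 * A$2$4 * A$3$3 * A$4$2 - A$1$2 * A$2$1 * A$3$3 * A$4$4 + A$1$2 * A$2$1 * A$3$4 * A$4$3 + A$1$2 * A$2$3 * A$3$1 * A$4$4 - A$1$2 * A$2$3 * A$3$4 * A$4$1 - A$1$2 * A$2$4 * A$3$1 * A$4$3 + A$1$2 * A$2$4 * A$3$3 * A$4$1 + A$1$3 * A$2$1 * A$3$2 * A$4$4 - A$1$3 * A$2$1 * A$3$4 * A$4$2 - A$1$3 * A$2$2 * A$3$1 * A$4$4 + A$1$3 * A$2$2 * A$3$4 * A$4$1 + A$1$3 * A$2$4 * A$3$1 * A$4$2 - A$1$3 * A$2$4 * A$3$2 * A$4$1 - A$1$4 * A$2$1 * A$3$2 * A$4$3 + A$1$4 * A$2$1 * A$3$3 * A$4$2 + A$1$4 * A$2$2 * A$3$1 * A$4$3 - A$1$4 * A$2$2 * A$3$3 * A$4$1 - A$1$4 * A$2$3 * A$3$1 * A$4$2 + A$1$4 * A$2$3 * A$3$2 * A$4$1"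
proof -
  have f1: "finite {2::4, 3, 4}" "1 \<notin> {2::4, 3, 4}" by auto
  have f2: "finite {3::4, 4}" "2 \<notin> {3::4, 4}" by auto
  have f3: "finite {4::4}" "3 \<notin> {4::4}" by auto
  show ?thesis
    unfolding det_def UNIV_4
    unfolding sum_over_permutations_insert[OF f1]
    unfolding sum_over_permutations_insert[OF f2]
    unfolding sum_over_permutations_insert[OF f3]
    unfolding permutes_sing
    by (simp add: sign_swap_id permutation_swap_id sign_compose permutation_compose sign_id swap_id_eq algebra_simps)
qed

lemma det4_expl: "det4 a b c d = a$1 * b$2 * c$3 * d$4 - a$1 * b$2 * c$4 * d$3 - a$1 * b$3 * c$2 * d$4 + a$1 * b$3 * c$4 * d$2 + a$1 * b$4 * c$2 * d$3 - a$1 * b$4 * c$3 * d$2 - a$2 * b$1 * c$3 * d$4 + a$2 * b$1 * c$4 * d$3 + a$2 * b$3 * c$1 * d$4 - a$2 * b$3 * c$4 * d$1 - a$2 * b$4 * c$1 * d$3 + a$2 * b$4 * c$3 * d$1 + a$3 * b$1 * c$2 * d$4 - a$3 * b$1 * c$4 * d$2 - a$3 * b$2 * c$1 * d$4 + a$3 * b$2 * c$4 * d$1 + a$3 * b$4 * c$1 * d$2 - a$3 * b$4 * c$2 * d$1 - a$4 * b$1 * c$2 * d$3 + a$4 * b$1 * c$3 * d$2 + a$4 * b$2 * c$1 * d$3 - a$4 * b$2 * c$3 * d$1 - a$4 * b$3 * c$1 * d$2 + a$4 * b$3 * c$2 * d$1"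
  unfolding det4_def det_4 mat4_def by simp

lemma det4_swap12: "det4 b a c d = - det4 a b c d"
  unfolding det4_expl by (simp add: algebra_simps)
lemma det4_swap23: "det4 a c b d = - det4 a b c d"
  unfolding det4_expl by (simp add: algebra_simps)
lemma det4_swap34: "det4 a b d c = - det4 a b c d"
  unfolding det4_expl by (simp add: algebra_simps)
lemma det4_add1: "det4 (a + a') b c d = det4 a b c d + det4 a' b c d"
  unfolding det4_expl by (simp add: algebra_simps)
lemma det4_scale1: "det4 (r *s a) b c d = r * det4 a b c d"
  unfolding det4_expl by (simp add: algebra_simps)
lemma det4_zero1: "det4 0 b c d = 0"
  unfolding det4_expl by simp

lemma det4_sum1: "finite K \<Longrightarrow> det4 (\<Sum>k\<in>K. f k *\<^sub>R v k) b c d = (\<Sum>k\<in>K. f k * det4 (v k) b c d)"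
  by (induction K rule: finite_induct) (simp_all add: det4_zero1 det4_add1 scalar_mult_eq_scaleR[symmetric] det4_scale1)

lemma det4_sum2: "finite K \<Longrightarrow> det4 a (\<Sum>k\<in>K. f k *\<^sub>R v k) c d = (\<Sum>k\<in>K. f k * det4 a (v k) c d)"
proof -
  assume K: "finite K"
  have "det4 a (\<Sum>k\<in>K. f k *\<^sub>R v k) c d = - det4 (\<Sum>k\<in>K. f k *\<^sub>R v k) a c d"
    by (rule det4_swap12)
  also have "\<dots> = - (\<Sum>k\<in>K. f k * det4 (v k) a c d)" using det4_sum1[OF K] by simp
  also have "\<dots> = (\<Sum>k\<in>K. f k * det4 a (v k) c d)"
    by (simp add: sum_negf[symmetric] det4_swap12[of a])
  finally show ?thesis .
qed



lemma det4_eq12: "det4 a a c d = 0" unfolding det4_expl by (simp add: algebra_simps)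
lemma det4_eq23: "det4 a b b d = 0" unfolding det4_expl by (simp add: algebra_simps)
lemma det4_eq34: "det4 a b c c = 0" unfolding det4_expl by (simp add: algebra_simps)
lemma det4_eq13: "det4 a b a d = 0" unfolding det4_expl by (simp add: algebra_simps)
lemma det4_eq14: "det4 a b c a = 0" unfolding det4_expl by (simp add: algebra_simps)
lemma det4_eq24: "det4 a b c b = 0" unfolding det4_expl by (simp add: algebra_simps)
lemma det4_lin_id2:
  "t * det4 a b c d = det4 a (s *s a + t *s b) c d - det4 a (u *s c + w *s d) c d"
  by (simp add: det4_add1 det4_scale1 det4_expl algebra_simps)

lemma rows_mat4: "rows (mat4 a b c d) = {a, b, c, d}"
proof -
  have "rows (mat4 a b c d) = (\<lambda>k. (mat4 a b c d) $ k) ` UNIV"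
    by (auto simp: rows_def row_def vec_eq_iff)
  also have "\<dots> = {a, b, c, d}" unfolding UNIV_4 by (auto simp: mat4_def)
  finally show ?thesis .
qed

lemma det4_indep:
  fixes a b c d :: "real^4"
  assumes "det4 a b c d \<noteq> 0"
  shows "independent {a, b, c, d} \<and> card {a, b, c, d} = 4"
proof
  show "independent {a, b, c, d}"
    using det_dependent_rows[of "mat4 a b c d"] assms
    by (auto simp: det4_def rows_mat4 dependent_vec_eq)
  have "a \<noteq> b" "a \<noteq> c" "a \<noteq> d" "b \<noteq> c" "b \<noteq> d" "c \<noteq> d"
    using assms det4_eq12 det4_eq13 det4_eq14 det4_eq23 det4_eq24 det4_eq34 by metis+
  then show "card {a, b, c, d} = 4" by simp
qed

lemma det4_span3:
  fixes a b c d :: "real^4"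
  assumes "{a, b, c, d} \<subseteq> span {p, q, r}"
  shows "det4 a b c d = 0"
proof (rule ccontr)
  assume "det4 a b c d \<noteq> 0"
  from det4_indep[OF this] have "independent {a, b, c, d}" "card {a, b, c, d} = 4" by auto
  with independent_span_bound[of "{p,q,r}" "{a,b,c,d}"] assms
  have "4 \<le> card {p, q, r}" by auto
  moreover have "card {p, q, r} \<le> 3" by (simp add: card_insert_if)
  ultimately show False by simp
qed

lemma det4_lin_id:
  "s * det4 a b c d = det4 (s *s a + t *s b) b c d - det4 (u *s c + w *s d) b c d"
  by (simp add: det4_add1 det4_scale1 det4_expl algebra_simps)
lemma span2_coeffs:
  fixes v a b :: "real^4"
  assumes "v \<in> span {a, b}"
  obtains s t where "v = s *s a + t *s b"
proof -
  from assms obtain s where "v - s *\<^sub>R a \<in> span {b}" using span_breakdown_eq by blast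
  then obtain t where "v - s *\<^sub>R a = t *\<^sub>R b" using span_singleton by blast
  then have "v = s *s a + t *s b" by (simp add: scalar_mult_eq_scaleR algebra_simps)
  then show ?thesis using that by blast
qed

lemma det4_int:
  fixes a b c d v :: "real^4"
  assumes "det4 a b c d \<noteq> 0" "v \<in> span {a, b}" "v \<in> span {c, d}"
  shows "v = 0"
proof -
  obtain s t where st: "v = s *s a + t *s b" using span2_coeffs[OF assms(2)] by blast
  obtain u w where uw: "v = u *s c + w *s d" using span2_coeffs[OF assms(3)] by blast
  have "s * det4 a b c d = 0" using det4_lin_id[of s a b c d t u w] st uw by simp
  then have s: "s = 0" using assms(1) by simp
  have "t * det4 a b c d = 0" using det4_lin_id2[of t a b c d s u w] st uw by simp
  then have t: "t = 0" using assms(1) by simp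
  show ?thesis using st s t by simp
qed



lemma pair_sum:
  fixes g :: "nat \<Rightarrow> nat \<Rightarrow> real"
  assumes anti: "\<And>a b. g b a = - g a b"
  shows "(\<Sum>a<n. x1 a * (\<Sum>b<n. x2 b * g a b)) = (\<Sum>b<n. \<Sum>a<b. (x1 a * x2 b - x1 b * x2 a) * g a b)"
proof (induction n)
  case 0 then show ?case by simp
next
  case (Suc n)
  have gnn: "g n n = 0" using anti[of n n] by simp
  have "(\<Sum>a<Suc n. x1 a * (\<Sum>b<Suc n. x2 b * g a b))
      = (\<Sum>a<n. x1 a * (\<Sum>b<n. x2 b * g a b)) + (\<Sum>a<n. x1 a * x2 n * g a n)
        + x1 n * (\<Sum>b<n. x2 b * g n b) + x1 n * x2 n * g n n"
    by (simp add: algebra_simps sum.distrib sum_distrib_left)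
  also have "x1 n * (\<Sum>b<n. x2 b * g n b) = - (\<Sum>a<n. x1 n * x2 a * g a n)"
    by (simp add: anti[of _ n] sum_distrib_left sum_negf[symmetric] algebra_simps)
  finally have "(\<Sum>a<Suc n. x1 a * (\<Sum>b<Suc n. x2 b * g a b))
      = (\<Sum>a<n. x1 a * (\<Sum>b<n. x2 b * g a b)) + (\<Sum>a<n. (x1 a * x2 n - x1 n * x2 a) * g a n)"
    using gnn by (simp add: algebra_simps sum_subtractf)
  then show ?case using Suc.IH by simp
qed

lemma det4_YY:
  fixes Z :: "nat \<Rightarrow> real^4"
  shows "det4 (\<Sum>k<n. x1 k *\<^sub>R Z k) (\<Sum>k<n. x2 k *\<^sub>R Z k) C D =
    (\<Sum>b<n. \<Sum>a<b. (x1 a * x2 b - x1 b * x2 a) * det4 (Z a) (Z b) C D)"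
proof -
  have "det4 (\<Sum>k<n. x1 k *\<^sub>R Z k) (\<Sum>k<n. x2 k *\<^sub>R Z k) C D =
     (\<Sum>a<n. x1 a * det4 (Z a) (\<Sum>k<n. x2 k *\<^sub>R Z k) C D)"
    by (rule det4_sum1) simp
  also have "\<dots> = (\<Sum>a<n. x1 a * (\<Sum>b<n. x2 b * det4 (Z a) (Z b) C D))"
    by (simp add: det4_sum2)
  also have "\<dots> = (\<Sum>b<n. \<Sum>a<b. (x1 a * x2 b - x1 b * x2 a) * det4 (Z a) (Z b) C D)"
    by (rule pair_sum) (rule det4_swap12)
  finally show ?thesis .
qed

lemma e1: "det4 a b c d = det4 c d a b" unfolding det4_expl by (simp add: algebra_simps)
lemma e2: "det4 a b c d = det4 a c d b" unfolding det4_expl by (simp add: algebra_simps)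
lemma e3: "det4 a b c d = - det4 a c b d" unfolding det4_expl by (simp add: algebra_simps)
lemma e4: "det4 a b c d = det4 c a b d" unfolding det4_expl by (simp add: algebra_simps)
lemma e5: "det4 a b c d = - det4 c a d b" unfolding det4_expl by (simp add: algebra_simps)

lemma tpD: "totally_positive n Z \<Longrightarrow> i1 < i2 \<Longrightarrow> i2 < i3 \<Longrightarrow> i3 < i4 \<Longrightarrow> i4 < n \<Longrightarrow>
   det4 (Z i1) (Z i2) (Z i3) (Z i4) > 0"
  unfolding totally_positive_def by blast

lemma sign_pos:
  assumes tp: "totally_positive n Z" and "a < b" "c < d" "b < n" "d < n"
    "a \<noteq> c" "a \<noteq> d" "b \<noteq> c" "b \<noteq> d"
    "(a < c \<and> c < b) = (a < d \<and> d < b)"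
  shows "det4 (Z a) (Z b) (Z c) (Z d) > 0"
proof -
  consider "b < c" | "d < a" | "a < c \<and> d < b" | "c < a \<and> b < d"
    using assms(2-10) by linarith
  then show ?thesis
  proof cases
    case 1 then show ?thesis using tpD[OF tp, of a b c d] assms by simp
  next
    case 2 then show ?thesis using tpD[OF tp, of c d a b] assms e1[of "Z a" "Z b" "Z c" "Z d"] by simp
  next
    case 3 then show ?thesis using tpD[OF tp, of a c d b] assms e2[of "Z a" "Z b" "Z c" "Z d"] by simp
  next
    case 4 then show ?thesis using tpD[OF tp, of c a b d] assms e4[of "Z a" "Z b" "Z c" "Z d"] by simp
  qed
qed

lemma sign_neg:
  assumes tp: "totally_positive n Z" and "a < b" "c < d" "b < n" "d < n"
    "a \<noteq> c" "a \<noteq> d" "b \<noteq> c" "b \<noteq> d"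
    "(a < c \<and> c < b) \<noteq> (a < d \<and> d < b)"
  shows "det4 (Z a) (Z b) (Z c) (Z d) < 0"
proof -
  consider "a < c \<and> c < b \<and> b < d" | "c < a \<and> a < d \<and> d < b"
    using assms(2-10) by linarith
  then show ?thesis
  proof cases
    case 1 then show ?thesis using tpD[OF tp, of a c b d] assms e3[of "Z a" "Z b" "Z c" "Z d"] by simp
  next
    case 2 then show ?thesis using tpD[OF tp, of c a d b] assms e5[of "Z a" "Z b" "Z c" "Z d"] by simp
  qed
qed

lemma sum_nonneg_zero2:
  fixes f :: "nat \<Rightarrow> nat \<Rightarrow> real"
  assumes "\<And>a b. a < b \<Longrightarrow> b < n \<Longrightarrow> f a b \<ge> 0" "(\<Sum>b<n. \<Sum>a<b. f a b) = 0"
    "a < b" "b < n"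
  shows "f a b = 0"
proof -
  have nn: "\<forall>b\<in>{..<n}. 0 \<le> (\<Sum>a<b. f a b)" using assms(1) by (auto intro: sum_nonneg)
  have "(\<Sum>a<b. f a b) = 0" using sum_nonneg_eq_0_iff[of "{..<n}" "\<lambda>b. \<Sum>a<b. f a b"] nn assms(2,4) by simp
  then show ?thesis using sum_nonneg_eq_0_iff[of "{..<b}" "\<lambda>a. f a b"] assms(1,3,4) by simp
qed

definition pl :: "(nat \<Rightarrow> real) \<Rightarrow> (nat \<Rightarrow> real) \<Rightarrow> nat \<Rightarrow> nat \<Rightarrow> real" where
  "pl x1 x2 a b = x1 a * x2 b - x1 b * x2 a"

lemma adj_zero:
  fixes Z :: "nat \<Rightarrow> real^4"
  assumes tp: "totally_positive n Z" and tnn: "tnn_Gr2 n x1 x2"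
    and cd: "c < d" "d < n" "d = c + 1 \<or> (c = 0 \<and> d = n - 1)"
    and z: "det4 (\<Sum>k<n. x1 k *\<^sub>R Z k) (\<Sum>k<n. x2 k *\<^sub>R Z k) (Z c) (Z d) = 0"
    and ab: "a < b" "b < n" "a \<noteq> c" "a \<noteq> d" "b \<noteq> c" "b \<noteq> d"
  shows "pl x1 x2 a b = 0"
proof -
  let ?f = "\<lambda>a b. pl x1 x2 a b * det4 (Z a) (Z b) (Z c) (Z d)"
  have nn: "?f a' b' \<ge> 0" if "a' < b'" "b' < n" for a' b'
  proof -
    have p: "pl x1 x2 a' b' \<ge> 0" using tnn that unfolding tnn_Gr2_def pl_def by blast
    have "det4 (Z a') (Z b') (Z c) (Z d) \<ge> 0"
    proof (cases "a' = c \<or> a' = d \<or> b' = c \<or> b' = d")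
      case True then show ?thesis
        by (elim disjE) (simp_all add: det4_eq13 det4_eq14 det4_eq23 det4_eq24)
    next
      case False
      have "(a' < c \<and> c < b') = (a' < d \<and> d < b')" using cd that False by auto
      then show ?thesis using sign_pos[OF tp that(1) cd(1) that(2) cd(2)] False by fastforce
    qed
    then show ?thesis using p by simp
  qed
  have "(\<Sum>b<n. \<Sum>a<b. ?f a b) = 0" using z by (simp add: det4_YY pl_def)
  then have "?f a b = 0" using sum_nonneg_zero2[of n ?f, OF nn] ab by blast
  moreover have "det4 (Z a) (Z b) (Z c) (Z d) > 0"
  proof -
    have "(a < c \<and> c < b) = (a < d \<and> d < b)" using cd ab by auto
    then show ?thesis using sign_pos[OF tp ab(1) cd(1) ab(2) cd(2)] ab by fastforce
  qed
  ultimately show ?thesis by simp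
qed



lemma adj_zero':
  fixes Z :: "nat \<Rightarrow> real^4"
  assumes tp: "totally_positive n Z" and tnn: "tnn_Gr2 n x1 x2" and n: "n \<ge> 2"
    and u: "u < n" and v: "v = (if u = n - 1 then 0 else u + 1)"
    and z: "det4 (\<Sum>k<n. x1 k *\<^sub>R Z k) (\<Sum>k<n. x2 k *\<^sub>R Z k) (Z u) (Z v) = 0"
    and ab: "a < b" "b < n" "a \<notin> {u, v}" "b \<notin> {u, v}"
  shows "pl x1 x2 a b = 0"
proof (cases "u = n - 1")
  case True
  then have v0: "v = 0" using v by simp
  have "det4 (\<Sum>k<n. x1 k *\<^sub>R Z k) (\<Sum>k<n. x2 k *\<^sub>R Z k) (Z 0) (Z (n - 1)) = 0"
    using z True v0 det4_swap34 by (metis neg_equal_0_iff_equal)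
  then show ?thesis
    using adj_zero[OF tp tnn, of 0 "n - 1"] n ab True v0 by auto
next
  case False
  then show ?thesis using adj_zero[OF tp tnn, of u "u + 1"] n ab u v z by auto
qed

lemma mod_prev: "(i::nat) < n \<Longrightarrow> (i + n - 1) mod n = (if i = 0 then n - 1 else i - 1)"
proof -
  assume i: "i < n"
  show ?thesis
  proof (cases "i = 0")
    case True
    have "n - 1 < n" using i by simp
    then show ?thesis using True by simp
  next
    case False
    then have e: "i + n - 1 = (i - 1) + n" by simp
    have "((i - 1) + n) mod n = (i - 1) mod n" by (rule mod_add_self2)
    also have "\<dots> = i - 1" using i by simp
    finally show ?thesis using False e by simp
  qed
qed

lemma mod_next: "(i::nat) < n \<Longrightarrow> (i + 1) mod n = (if i = n - 1 then 0 else i + 1)"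
proof -
  assume i: "i < n"
  show ?thesis
  proof (cases "i = n - 1")
    case True then have "i + 1 = n" using i by simp
    then show ?thesis using True by simp
  next
    case False then have "i + 1 < n" using i by simp
    then show ?thesis using False by simp
  qed
qed

lemma cross_lemma:
  fixes n i k :: nat
  assumes n: "n \<ge> 3" and i: "i < n" and k: "k < n"
    and i1: "i1 = (if i = 0 then n - 1 else i - 1)" and i2: "i2 = (if i = n - 1 then 0 else i + 1)"
    and kk: "k \<notin> {i1, i, i2}"
    and c: "c = min i1 i2" and d: "d = max i1 i2"
    and ab: "(a = i \<and> b = k) \<or> (a = k \<and> b = i)" and lt: "a < b"
  shows "c < d \<and> d < n \<and> a \<noteq> c \<and> a \<noteq> d \<and> b \<noteq> c \<and> b \<noteq> d \<and>
         (a < c \<and> c < b) \<noteq> (a < d \<and> d < b)"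
proof -
  consider "i = 0" | "i = n - 1" | "0 < i \<and> i < n - 1" using i by linarith
  then show ?thesis
  proof cases
    case 1
    then have "i1 = n - 1" "i2 = 1" using i1 i2 n by auto
    then show ?thesis using c d ab lt kk k n 1 by auto
  next
    case 2
    then have "i1 = n - 2" "i2 = 0" using i1 i2 n by auto
    then show ?thesis using c d ab lt kk k n 2 by auto
  next
    case 3
    then have "i1 = i - 1" "i2 = i + 1" using i1 i2 n by auto
    then show ?thesis using c d ab lt kk k n 3 by auto
  qed
qed



theorem lemma4p5:
  fixes n :: nat and Z :: "nat \<Rightarrow> real^4" and i j :: nat
  assumes "n \<ge> 5"
    and "totally_positive n Z"
    and "assumption_G n Z"
    and "i < n" and "j < n"
    and "j \<notin> {(i + n - 1) mod n, i, (i + 1) mod n}"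
    and "(j + 1) mod n \<notin> {(i + n - 1) mod n, i, (i + 1) mod n}"
  shows "\<not> (\<exists>W \<in> amplituhedron n Z.
            W \<subseteq> span {Z ((i + n - 1) mod n), Z i, Z ((i + 1) mod n)} \<and>
            W \<inter> span {Z j, Z ((j + 1) mod n)} \<noteq> {0})"
proof
  assume "\<exists>W \<in> amplituhedron n Z.
            W \<subseteq> span {Z ((i + n - 1) mod n), Z i, Z ((i + 1) mod n)} \<and>
            W \<inter> span {Z j, Z ((j + 1) mod n)} \<noteq> {0}"
  then obtain W x1 x2 where tnn: "tnn_Gr2 n x1 x2"
    and W: "W = span {(\<Sum>k<n. x1 k *\<^sub>R Z k), (\<Sum>k<n. x2 k *\<^sub>R Z k)}"
    and WP: "W \<subseteq> span {Z ((i + n - 1) mod n), Z i, Z ((i + 1) mod n)}"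
    and WL: "W \<inter> span {Z j, Z ((j + 1) mod n)} \<noteq> {0}"
    unfolding amplituhedron_def by blast
  note tp = assms(2)
  define Y1 where "Y1 = (\<Sum>k<n. x1 k *\<^sub>R Z k)"
  define Y2 where "Y2 = (\<Sum>k<n. x2 k *\<^sub>R Z k)"
  define i1 where "i1 = (i + n - 1) mod n"
  define i2 where "i2 = (i + 1) mod n"
  define j2 where "j2 = (j + 1) mod n"
  have i1e: "i1 = (if i = 0 then n - 1 else i - 1)" unfolding i1_def using mod_prev assms(4) by blast
  have i2e: "i2 = (if i = n - 1 then 0 else i + 1)" unfolding i2_def using mod_next assms(4) by blast
  have j2e: "j2 = (if j = n - 1 then 0 else j + 1)" unfolding j2_def using mod_next assms(5) by blast
  have i1n: "i1 < n" and i2n: "i2 < n" and j2n: "j2 < n" using i1e i2e j2e assms(1,4,5) by auto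
  have ii1: "i = (if i1 = n - 1 then 0 else i1 + 1)" using i1e assms(1,4) by auto
  have jn: "j \<notin> {i1, i, i2}" "j2 \<notin> {i1, i, i2}" using assms(6,7) unfolding i1_def i2_def j2_def by auto
  have dist: "i1 \<noteq> i" "i \<noteq> i2" "i1 \<noteq> i2" using i1e i2e assms(1,4) by auto
  have YW: "Y1 \<in> W" "Y2 \<in> W" unfolding W Y1_def Y2_def by (auto intro: span_base)
  let ?P = "span {Z i1, Z i, Z i2}"
  have YP: "Y1 \<in> ?P" "Y2 \<in> ?P" using YW WP unfolding i1_def i2_def by auto
  have ZP: "Z i1 \<in> ?P" "Z i \<in> ?P" "Z i2 \<in> ?P" by (auto intro: span_base)
  have h1: "det4 Y1 Y2 (Z i1) (Z i) = 0" by (rule det4_span3) (use YP ZP in auto)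
  have h2: "det4 Y1 Y2 (Z i) (Z i2) = 0" by (rule det4_span3) (use YP ZP in auto)
  have h3: "det4 Y1 Y2 (Z i1) (Z i2) = 0" by (rule det4_span3) (use YP ZP in auto)
  have h4: "det4 Y1 Y2 (Z j) (Z j2) = 0"
  proof (rule ccontr)
    assume ne: "det4 Y1 Y2 (Z j) (Z j2) \<noteq> 0"
    have z0: "0 \<in> W" "0 \<in> span {Z j, Z j2}" unfolding W by (auto intro: span_zero)
    from WL z0 obtain v where v: "v \<in> W" "v \<in> span {Z j, Z j2}" "v \<noteq> 0"
      unfolding j2_def by blast
    have "v \<in> span {Y1, Y2}" using v W Y1_def Y2_def by simp
    then have "v = 0" using det4_int[OF ne _ v(2)] by blast
    then show False using v by simp
  qed
  have n2: "n \<ge> 2" and n3: "n \<ge> 3" using assms(1) by auto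
  have A1: "pl x1 x2 a b = 0" if "a < b" "b < n" "a \<notin> {i1, i}" "b \<notin> {i1, i}" for a b
    using adj_zero'[OF tp tnn n2 i1n ii1] h1 that unfolding Y1_def Y2_def by blast
  have A2: "pl x1 x2 a b = 0" if "a < b" "b < n" "a \<notin> {i, i2}" "b \<notin> {i, i2}" for a b
    using adj_zero'[OF tp tnn n2 assms(4) i2e] h2 that unfolding Y1_def Y2_def by blast
  have A3: "pl x1 x2 a b = 0" if "a < b" "b < n" "a \<notin> {j, j2}" "b \<notin> {j, j2}" for a b
    using adj_zero'[OF tp tnn n2 assms(5) j2e] h4 that unfolding Y1_def Y2_def by blast
  define c where "c = min i1 i2"
  define d where "d = max i1 i2"
  have h3': "det4 Y1 Y2 (Z c) (Z d) = 0"
    using h3 det4_swap34[of Y1 Y2 "Z i1" "Z i2"] unfolding c_def d_def by (cases "i1 \<le> i2") auto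
  have Q: "det4 (Z a) (Z b) (Z c) (Z d) < 0" if ab: "a < b" "b < n" "pl x1 x2 a b \<noteq> 0" for a b
  proof -
    have "\<exists>k. k \<in> {j, j2} \<and> ((a = i \<and> b = k) \<or> (a = k \<and> b = i))"
      using A1[OF ab(1,2)] A2[OF ab(1,2)] A3[OF ab(1,2)] ab(3) jn dist by blast
    then obtain k where k: "k \<in> {j, j2}" "(a = i \<and> b = k) \<or> (a = k \<and> b = i)" by blast
    have kk: "k \<notin> {i1, i, i2}" "k < n" using k(1) jn assms(5) j2n by auto
    have cr: "c < d \<and> d < n \<and> a \<noteq> c \<and> a \<noteq> d \<and> b \<noteq> c \<and> b \<noteq> d \<and>
         (a < c \<and> c < b) \<noteq> (a < d \<and> d < b)"
      by (rule cross_lemma[OF n3 assms(4) kk(2) i1e i2e kk(1) c_def d_def k(2) ab(1)])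
    show ?thesis using sign_neg[OF tp ab(1)] cr ab(2) by blast
  qed
  let ?f = "\<lambda>a b. - (pl x1 x2 a b * det4 (Z a) (Z b) (Z c) (Z d))"
  have nn: "?f a b \<ge> 0" if "a < b" "b < n" for a b
  proof (cases "pl x1 x2 a b = 0")
    case True then show ?thesis by simp
  next
    case False
    have "pl x1 x2 a b \<ge> 0" using tnn that unfolding tnn_Gr2_def pl_def by blast
    then show ?thesis using Q[OF that False] by (simp add: mult_nonneg_nonpos)
  qed
  have "(\<Sum>b<n. \<Sum>a<b. pl x1 x2 a b * det4 (Z a) (Z b) (Z c) (Z d)) = 0"
    using h3' unfolding Y1_def Y2_def by (simp add: det4_YY pl_def)
  then have s0: "(\<Sum>b<n. \<Sum>a<b. ?f a b) = 0" by (simp add: sum_negf)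
  have allz: "pl x1 x2 a b = 0" if "a < b" "b < n" for a b
  proof (rule ccontr)
    assume ne: "pl x1 x2 a b \<noteq> 0"
    have "?f a b = 0" using sum_nonneg_zero2[of n ?f, OF nn s0 that] by blast
    then show False using Q[OF that ne] ne by simp
  qed
  from tnn obtain a b where ab: "a < n" "b < n" "x1 a * x2 b - x1 b * x2 a \<noteq> 0"
    unfolding tnn_Gr2_def by blast
  consider "a < b" | "b < a" | "a = b" by linarith
  then show False
  proof cases
    case 1 then show False using allz[of a b] ab unfolding pl_def by simp
  next
    case 2 then show False using allz[of b a] ab unfolding pl_def by (simp add: algebra_simps)
  next
    case 3 then show False using ab by simp
  qed
qed


end
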